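(* Let $n=p_1^{\alpha_1}p_2^{\alpha_2}\cdots p_r^{\alpha_r}$ be a positive integer, where the $p_i$ are primes with $2<p_1<p_2<\cdots<p_r=p$ and $\alpha_i>0$ for each $1\le i\le r$. If $p\ge 37$, then $$\psi(C_n)\ \ge\ h'(12)\,\frac{n^2}{p+1},$$ where $h'(12)=37\cdot\prod_{i=2}^{11}\frac{q_i}{q_i+1}=37\cdot\frac{3}{4}\cdot\frac{5}{6}\cdot\frac{7}{8}\cdot\frac{11}{12}\cdot\frac{13}{14}\cdot\frac{17}{18}\cdot\frac{19}{20}\cdot\frac{23}{24}\cdot\frac{29}{30}\cdot\frac{31}{32}$.
   Context: For a finite group $G$, $\psi(G)=\sum_{g\in G} o(g)$, where $o(g)$ is the order of $g$; $C_n$ is the cyclic group of order $n$. Let $2=q_1<q_2<q_3<\cdots$ be the list of all primes in increasing order. Define $f'(1)=1$, $f'(r)=\prod_{i=2}^{r}\frac{q_i}{q_i+1}$ for $r\ge 2$, and $h'(2)=3$, $h'(s)=f'(s-1)\,q_s$ for $s\ge 2$; in particular $q_{12}=37$. *)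

theory Defs
  imports Complex_Main "HOL-Algebra.Elementary_Groups" "HOL-Algebra.Multiplicative_Group" "HOL-Computational_Algebra.Primes"
    "HOL-Library.Infinite_Set"
begin

definition psi :: "('a, 'b) monoid_scheme \<Rightarrow> nat" where
  "psi G = (\<Sum>g\<in>carrier G. group.ord G g)"

abbreviation cyclic_group_C :: "nat \<Rightarrow> int monoid" where
  "cyclic_group_C n \<equiv> integer_mod_group n"

text \<open>q i = i-th prime (1-indexed): q 1 = 2, q 2 = 3, ...\<close>
definition q :: "nat \<Rightarrow> nat" where
  "q i = enumerate {p::nat. prime p} (i - 1)"

definition f' :: "nat \<Rightarrow> real" where
  "f' r = (if r \<le> 1 then 1 else (\<Prod>i\<in>{2..r}. real (q i) / (real (q i) + 1)))"

definition h' :: "nat \<Rightarrow> real" where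
  "h' s = (if s = 2 then 3 else f' (s - 1) * real (q s))"

end

theory Submission
  imports Defs
begin


lemma gcd_coprime_mult:
  fixes k a b :: nat
  assumes "coprime a b"
  shows "gcd k (a*b) = gcd k a * gcd k b"
proof (rule dvd_antisym)
  obtain d1 d2 where d: "gcd k (a*b) = d1*d2" "d1 dvd a" "d2 dvd b"
    using division_decomp[of "gcd k (a*b)" a b] by auto
  have "d1 dvd gcd k (a*b)" "d2 dvd gcd k (a*b)" using d(1) by simp_all
  then have "d1 dvd k" "d2 dvd k" using gcd_dvd1 dvd_trans by blast+
  then show "gcd k (a*b) dvd gcd k a * gcd k b"
    using d by (simp add: mult_dvd_mono)
next
  have c: "coprime (gcd k a) (gcd k b)"
    using assms by (rule coprime_imp_coprime) (meson dvd_trans gcd_dvd2 gcd_dvd1)+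
  have "gcd k a * gcd k b dvd k"
    using c by (simp add: divides_mult)
  moreover have "gcd k a * gcd k b dvd a*b"
    by (simp add: mult_dvd_mono)
  ultimately show "gcd k a * gcd k b dvd gcd k (a*b)" by simp
qed

lemma crt_inj:
  fixes a b x y :: nat
  assumes "coprime a b" "x mod a = y mod a" "x mod b = y mod b"
  shows "x mod (a*b) = y mod (a*b)"
proof -
  have "int x mod int a = int y mod int a" "int x mod int b = int y mod int b"
    using assms by (metis of_nat_mod)+
  then have "int a dvd int x - int y" "int b dvd int x - int y"
    by (simp_all add: mod_eq_dvd_iff)
  moreover have "coprime (int a) (int b)" using assms by simp
  ultimately have "int a * int b dvd int x - int y" by (simp add: divides_mult)
  then have "int x mod (int a * int b) = int y mod (int a * int b)"
    by (simp add: mod_eq_dvd_iff)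
  then show ?thesis by (metis of_nat_mod of_nat_mult of_nat_eq_iff)
qed

definition Gs :: "nat \<Rightarrow> nat" where "Gs n = (\<Sum>k<n. n div gcd k n)"

lemma dvd_mult_iff_div_gcd:
  fixes n k m :: nat
  assumes "n > 0"
  shows "n dvd m * k \<longleftrightarrow> n div gcd k n dvd m"
  by (metis (no_types, lifting) assms div_dvd_div dvd_triv_right
    gcd_eq_0_iff gcd_mult_distrib_nat gcd_nat.bounded_iff gcd_unique_nat
    neq0_conv nonzero_mult_div_cancel_right)

lemma ord_mod:
  assumes "n > 0" "k < n"
  shows "group.ord (integer_mod_group n) (int k) = n div gcd k n"
proof -
  interpret G: group "integer_mod_group n" by simp
  have c: "int k \<in> carrier (integer_mod_group n)"
    using assms by (simp add: carrier_integer_mod_group)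
  have "\<forall>m::nat. pow (integer_mod_group n) (int k) m = \<one>\<^bsub>integer_mod_group n\<^esub> \<longleftrightarrow> n div gcd k n dvd m"
  proof
    fix m :: nat
    have "pow (integer_mod_group n) (int k) m = \<one>\<^bsub>integer_mod_group n\<^esub> \<longleftrightarrow> (int m * int k) mod int n = 0"
      by simp
    also have "\<dots> \<longleftrightarrow> n dvd m * k"
      by (metis of_nat_mult of_nat_dvd_iff dvd_eq_mod_eq_0)
    also have "\<dots> \<longleftrightarrow> n div gcd k n dvd m" using dvd_mult_iff_div_gcd assms(1) by blast
    finally show "pow (integer_mod_group n) (int k) m = \<one>\<^bsub>integer_mod_group n\<^esub> \<longleftrightarrow> n div gcd k n dvd m" .
  qed
  then show ?thesis using G.ord_unique[OF c] by blast
qed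

lemma psi_Gs:
  assumes "n > 0"
  shows "psi (integer_mod_group n) = Gs n"
proof -
  have "psi (integer_mod_group n) = (\<Sum>g\<in>int ` {0..<n}. group.ord (integer_mod_group n) g)"
    unfolding psi_def using assms by (simp add: carrier_integer_mod_group image_int_atLeastLessThan)
  also have "\<dots> = (\<Sum>k\<in>{0..<n}. group.ord (integer_mod_group n) (int k))"
    by (simp add: sum.reindex)
  also have "\<dots> = (\<Sum>k\<in>{0..<n}. n div gcd k n)"
    using assms by (intro sum.cong) (auto simp: ord_mod)
  finally show ?thesis unfolding Gs_def by (simp add: lessThan_atLeast0)
qed

lemma crt_bij:
  fixes a b :: nat
  assumes "coprime a b"
  shows "bij_betw (\<lambda>k. (k mod a, k mod b)) {..<a*b} ({..<a} \<times> {..<b})"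
proof -
  let ?h = "\<lambda>k. (k mod a, k mod b)"
  have inj: "inj_on ?h {..<a*b}"
  proof (rule inj_onI)
    fix x y assume "x \<in> {..<a*b}" "y \<in> {..<a*b}" "?h x = ?h y"
    then have "x mod (a*b) = y mod (a*b)" using crt_inj[OF assms, of x y] by simp
    then show "x = y" using \<open>x \<in> {..<a*b}\<close> \<open>y \<in> {..<a*b}\<close> by simp
  qed
  show ?thesis
  proof (cases "a = 0 \<or> b = 0")
    case True then show ?thesis by (auto simp: bij_betw_def)
  next
    case False
    have sub: "?h ` {..<a*b} \<subseteq> {..<a} \<times> {..<b}" using False by auto
    have "card (?h ` {..<a*b}) = card ({..<a} \<times> {..<b})"
      using card_image[OF inj] by (simp add: card_cartesian_product)
    then have "?h ` {..<a*b} = {..<a} \<times> {..<b}"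
      using sub by (intro card_subset_eq) auto
    then show ?thesis using inj by (simp add: bij_betw_def)
  qed
qed

lemma Gs_mult:
  fixes a b :: nat
  assumes "coprime a b" "a > 0" "b > 0"
  shows "Gs (a*b) = Gs a * Gs b"
proof -
  define F where "F = (\<lambda>(i::nat,j::nat). (a div gcd i a) * (b div gcd j b))"
  have "Gs (a*b) = (\<Sum>k<a*b. F (k mod a, k mod b))"
    unfolding Gs_def
  proof (intro sum.cong refl)
    fix k
    have "gcd k (a*b) = gcd k a * gcd k b" using gcd_coprime_mult[OF assms(1)] .
    moreover have "gcd k a = gcd (k mod a) a" "gcd k b = gcd (k mod b) b"
      using assms by (simp_all add: gcd_mod_left)
    ultimately show "a * b div gcd k (a * b) = F (k mod a, k mod b)"
      unfolding F_def by (simp add: div_mult_div_if_dvd)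
  qed
  also have "\<dots> = sum F ({..<a} \<times> {..<b})"
    using sum.reindex_bij_betw[OF crt_bij[OF assms(1)], of F] by simp
  also have "\<dots> = (\<Sum>i<a. \<Sum>j<b. (a div gcd i a) * (b div gcd j b))"
    unfolding F_def by (simp add: sum.cartesian_product)
  also have "\<dots> = Gs a * Gs b"
    unfolding Gs_def by (simp add: sum_product)
  finally show ?thesis .
qed


lemma sum_split_blocks:
  fixes f :: "nat \<Rightarrow> nat"
  shows "(\<Sum>k<p*N. f k) = (\<Sum>j<N. \<Sum>r<p. f (j*p + r))"
proof -
  have blk: "sum f {j*p..<j*p+p} = (\<Sum>r<p. f (j*p + r))" for j
  proof -
    have "sum f {0 + j*p..<p + j*p} = (\<Sum>r=0..<p. f (r + j*p))"
      by (rule sum.shift_bounds_nat_ivl)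
    then show ?thesis
      by (simp add: lessThan_atLeast0 add.commute)
  qed
  have "(\<Sum>k<p*N. f k) = (\<Sum>j<N. sum f {j*p..<j*p+p})"
    using sum.nat_group[of f p N] by (simp add: mult.commute)
  also have "\<dots> = (\<Sum>j<N. \<Sum>r<p. f (j*p + r))"
    by (rule sum.cong[OF refl]) (rule blk)
  finally show ?thesis .
qed

lemma Gs_pp:
  assumes "prime p"
  shows "Gs (p^Suc a) = Gs (p^a) + p^a*(p-1)*p^(Suc a)"
proof -
  define N where "N = p^a"
  define M where "M = p^Suc a"
  have pos: "p > 0" "N > 0" using assms prime_gt_0_nat N_def by auto
  have MN: "M = p*N" unfolding M_def N_def by simp
  have inner: "(\<Sum>r<p. M div gcd (j*p + r) M) = N div gcd j N + (p-1)*M" for j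
  proof -
    obtain p' where p': "p = Suc p'" using pos by (cases p) auto
    have "(\<Sum>r<p. M div gcd (j*p + r) M) = M div gcd (j*p) M + (\<Sum>i<p'. M div gcd (j*p + Suc i) M)"
      unfolding p' by (subst sum.lessThan_Suc_shift) simp
    moreover have "M div gcd (j*p) M = N div gcd j N"
    proof -
      have "gcd (j*p) M = p * gcd j N" unfolding MN by (simp add: gcd_mult_distrib_nat mult.commute)
      then show ?thesis using pos unfolding MN by simp
    qed
    moreover have "M div gcd (j*p + Suc i) M = M" if "i < p'" for i
    proof -
      have lt: "Suc i < p" using that p' by simp
      have "(j*p + Suc i) mod p = Suc i mod p" by (simp only: mod_mult_self3)
      also have "\<dots> = Suc i" using lt by simp
      finally have "(j*p + Suc i) mod p = Suc i" .
      then have "\<not> p dvd (j*p + Suc i)" by (simp add: dvd_eq_mod_eq_0)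
      then have "coprime (j*p + Suc i) M" unfolding M_def using prime_imp_power_coprime[OF assms] by blast
      then show ?thesis by simp
    qed
    ultimately show ?thesis using p' by simp
  qed
  have "Gs M = (\<Sum>j<N. \<Sum>r<p. M div gcd (j*p + r) M)"
    unfolding Gs_def MN by (rule sum_split_blocks)
  also have "\<dots> = (\<Sum>j<N. N div gcd j N + (p-1)*M)" using inner by simp
  also have "\<dots> = Gs N + N*((p-1)*M)" unfolding Gs_def by (simp add: sum.distrib)
  finally show ?thesis unfolding M_def N_def by (simp add: mult.assoc)
qed

lemma Gs_pp_real:
  assumes "prime p"
  shows "real (Gs (p^a)) * (real p + 1) = real p ^ (2*a+1) + 1"
proof (induction a)
  case 0
  then show ?case by (simp add: Gs_def)
next
  case (Suc a)
  have p1: "p \<ge> 1" using assms prime_gt_0_nat by (simp add: Suc_leI)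
  have "real (Gs (p^Suc a)) = real (Gs (p^a)) + real p^a*(real p - 1)*real p^(Suc a)"
    using Gs_pp[OF assms, of a] p1 by (simp add: of_nat_diff)
  define r where "r = real p"
  define P where "P = r^a"
  have e1: "real p^(2*a+1) = r*P*P" unfolding P_def r_def by (simp add: power_add power_mult power2_eq_square mult.commute)
  have e2: "real p^Suc a = r*P" unfolding P_def r_def by simp
  have e3: "real p^(2*Suc a+1) = r*r*r*P*P" unfolding P_def r_def by (simp add: power_add power_mult power2_eq_square mult.commute mult.left_commute)
  have Y: "real (Gs (p^Suc a)) = real (Gs (p^a)) + P*(r - 1)*(r*P)"
    using \<open>real (Gs (p^Suc a)) = _\<close> unfolding e2 by (simp add: P_def r_def)
  have IH: "real (Gs (p^a)) * (r + 1) = r*P*P + 1" using Suc.IH unfolding e1 by (simp add: r_def)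
  have "real (Gs (p^Suc a)) * (r + 1) = real (Gs (p^a)) * (r + 1) + P*(r - 1)*(r*P)*(r+1)"
    unfolding Y by (simp add: algebra_simps)
  also have "\<dots> = r*P*P + 1 + P*(r - 1)*(r*P)*(r+1)" using IH by simp
  also have "\<dots> = r*r*r*P*P + 1" by (simp add: algebra_simps)
  finally have "real (Gs (p^Suc a)) * (r + 1) = r*r*r*P*P + 1" .
  then show ?case unfolding e3 by (simp add: r_def)
qed


lemma Gs_lower:
  assumes "n > 0"
  shows "real (Gs n) \<ge> real n^2 * (\<Prod>x\<in>prime_factors n. real x / (real x + 1))"
  using assms
proof (induction n rule: less_induct)
  case (less n)
  show ?case
  proof (cases "n = 1")
    case True
    then show ?thesis by (simp add: Gs_def)
  next
    case False
    then obtain p0 where "prime p0" "p0 dvd n" using prime_factor_nat by blast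
    then have "\<exists>p\<in>#prime_factorization n. True" using less.prems by (auto simp: in_prime_factors_iff)
    then obtain p k n' where pk: "prime p" "p dvd n" "\<not> p dvd n'" "0 < k" "n = p^k * n'"
      using divide_out_primepow_ex[of n "\<lambda>_. True"] less.prems by blast
    have n'pos: "n' > 0" using pk less.prems by (cases n') auto
    have p2: "p \<ge> 2" using pk prime_ge_2_nat by blast
    have "p^k \<ge> p" using pk p2 by (simp add: self_le_power)
    then have "n' < n" using pk n'pos p2
      by (metis less_le_trans mult_less_cancel2 nat_mult_1 one_less_numeral_iff semiring_norm(76) linorder_not_le le_trans)
    have cop: "coprime (p^k) n'" using prime_imp_power_coprime[OF pk(1) pk(3)] by (simp add: coprime_commute)
    have pf: "prime_factors n = insert p (prime_factors n')"
      using pk n'pos by (simp add: prime_factors_product prime_factorization_prime_power)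
    have pnot: "p \<notin> prime_factors n'" using pk by auto
    define Q where "Q = (\<Prod>x\<in>prime_factors n'. real x / (real x + 1))"
    have Q0: "Q \<ge> 0" unfolding Q_def by (intro prod_nonneg) auto
    have prodn: "(\<Prod>x\<in>prime_factors n. real x / (real x + 1)) = real p / (real p + 1) * Q"
      unfolding pf Q_def using pnot by simp
    have IH: "real (Gs n') \<ge> real n'^2 * Q" using less.IH[OF \<open>n' < n\<close> n'pos] unfolding Q_def .
    have A: "real (Gs (p^k)) \<ge> real p^(2*k+1) / (real p + 1)"
    proof -
      have "real (Gs (p^k)) = (real p^(2*k+1) + 1) / (real p + 1)"
        using Gs_pp_real[OF pk(1), of k] by (simp add: field_simps)
      then show ?thesis by (simp add: divide_right_mono)
    qed
    have "real (Gs n) = real (Gs (p^k)) * real (Gs n')"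
      using Gs_mult[OF cop] pk n'pos prime_gt_0_nat by simp
    also have "\<dots> \<ge> real p^(2*k+1) / (real p + 1) * (real n'^2 * Q)"
      using A IH Q0 by (intro mult_mono) auto
    finally have "real (Gs n) \<ge> real p^(2*k+1) / (real p + 1) * (real n'^2 * Q)" .
    moreover have "real p^(2*k+1) / (real p + 1) * (real n'^2 * Q) = real n^2 * (real p / (real p + 1) * Q)"
    proof -
      have e: "real p^(2*k+1) = (real p^k)^2 * real p"
        by (simp add: power_add mult.commute[of 2 k] power_mult)
      have nsq: "real n^2 = (real p^k)^2 * real n'^2" using pk(5) by (simp add: power_mult_distrib)
      show ?thesis unfolding e nsq by (simp add: field_simps)
    qed
    ultimately show ?thesis unfolding prodn by linarith
  qed
qed



lemma q_Suc:
  assumes "i \<ge> 1"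
  shows "q (Suc i) = (LEAST s. prime s \<and> q i < s)"
proof -
  have inf: "infinite {p::nat. prime p}" using primes_infinite by simp
  obtain j where j: "i = Suc j" using assms by (cases i) auto
  show ?thesis unfolding q_def j using enumerate_Suc''[OF inf, of j] by simp
qed

lemma q1: "q 1 = 2"
proof -
  have "q 1 = (LEAST n. n \<in> {p::nat. prime p})" unfolding q_def by (simp add: enumerate_0)
  also have "\<dots> = 2"
    by (rule Least_equality) (auto simp: prime_ge_2_nat)
  finally show ?thesis .
qed

lemma qstep:
  assumes "q i = a" "1 \<le> i" "prime b" "a < b" "\<forall>y\<in>{Suc a..<b}. \<not> prime y"
  shows "q (Suc i) = b"
  unfolding q_Suc[OF assms(2)] assms(1)
proof (rule Least_equality)
  show "prime b \<and> a < b" using assms by simp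
  fix y assume "prime y \<and> a < y"
  then show "b \<le> y" using assms(5) by (meson atLeastLessThan_iff leI less_eq_Suc_le)
qed

lemma q12: "q 2 = 3" "q 3 = 5" "q 4 = 7" "q 5 = 11" "q 6 = 13" "q 7 = 17" "q 8 = 19" "q 9 = 23"
  "q 10 = 29" "q 11 = 31" "q 12 = 37"
proof -
  note ss = atLeastLessThan_nat_numeral prime_nat_iff'
  have "q (Suc 1) = 3" using qstep[OF q1, of 3] by (simp add: ss)
  then have 2: "q 2 = 3" by (simp add: numeral_2_eq_2)
  have 3: "q 3 = 5" using qstep[OF 2, of 5] by (simp add: ss)
  have 4: "q 4 = 7" using qstep[OF 3, of 7] by (simp add: ss)
  have 5: "q 5 = 11" using qstep[OF 4, of 11] by (simp add: ss)
  have 6: "q 6 = 13" using qstep[OF 5, of 13] by (simp add: ss)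
  have 7: "q 7 = 17" using qstep[OF 6, of 17] by (simp add: ss)
  have 8: "q 8 = 19" using qstep[OF 7, of 19] by (simp add: ss)
  have 9: "q 9 = 23" using qstep[OF 8, of 23] by (simp add: ss)
  have 10: "q 10 = 29" using qstep[OF 9, of 29] by (simp add: ss)
  have 11: "q 11 = 31" using qstep[OF 10, of 31] by (simp add: ss)
  have 12: "q 12 = 37" using qstep[OF 11, of 37] by (simp add: ss)
  show "q 2 = 3" "q 3 = 5" "q 4 = 7" "q 5 = 11" "q 6 = 13" "q 7 = 17" "q 8 = 19" "q 9 = 23"
  "q 10 = 29" "q 11 = 31" "q 12 = 37" by fact+
qed

lemma h12: "h' 12 = 37 * (\<Prod>x\<in>{3,5,7,11,13,17,19,23,29,31::nat}. real x / (real x + 1))"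
proof -
  have I: "{2..11::nat} = {11,10,9,8,7,6,5,4,3,2}"
    by (simp add: atLeastLessThanSuc_atLeastAtMost[symmetric] atLeastLessThan_nat_numeral)
  have "h' 12 = f' 11 * real (q 12)" by (simp add: h'_def)
  also have "f' 11 = (\<Prod>i\<in>{2..11}. real (q i) / (real (q i) + 1))" by (simp add: f'_def)
  finally show ?thesis unfolding I by (simp add: q12)
qed
lemma T_eq: "{x\<in>{3..<37::nat}. prime x} = {3,5,7,11,13,17,19,23,29,31}"
proof (intro Set.set_eqI iffI)
  fix x assume "x \<in> {x\<in>{3..<37::nat}. prime x}"
  then have "x \<in> {3..<37}" "prime x" by auto
  have E: "{3..<37::nat} = {36,35,34,33,32,31,30,29,28,27,26,25,24,23,22,21,20,19,18,17,16,15,14,13,12,11,10,9,8,7,6,5,4,3}"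
    by (simp add: atLeastLessThan_nat_numeral)
  from \<open>x \<in> {3..<37}\<close> \<open>prime x\<close> show "x \<in> {3,5,7,11,13,17,19,23,29,31}"
    unfolding E
    by (elim insertE emptyE) (simp_all add: prime_nat_iff' atLeastLessThan_nat_numeral)
next
  fix x assume "x \<in> {3,5,7,11,13,17,19,23,29,31::nat}"
  then show "x \<in> {x\<in>{3..<37::nat}. prime x}"
    by (elim insertE emptyE) (simp_all add: prime_nat_iff' atLeastLessThan_nat_numeral)
qed

lemma telescope:
  assumes "1 \<le> a" "a \<le> b"
  shows "(\<Prod>x\<in>{a..<b}. real x / (real x + 1)) = real a / real b"
  using assms(2)
proof (induction b rule: dec_induct)
  case base
  then show ?case using assms by simp
next
  case (step c)
  have "{a..<Suc c} = insert c {a..<c}" using step by auto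
  then have "(\<Prod>x\<in>{a..<Suc c}. real x / (real x + 1)) = real c / (real c + 1) * (real a / real c)"
    using step by simp
  also have "\<dots> = real a / real (Suc c)" using step assms by (simp add: field_simps)
  finally show ?case .
qed

lemma prod_sub_ge:
  assumes "finite A" "B \<subseteq> A" "\<forall>x\<in>A. 0 \<le> (f x::real) \<and> f x \<le> 1"
  shows "prod f A \<le> prod f B"
proof -
  have "prod f A = prod f (A - B) * prod f B" using prod.subset_diff[OF assms(2,1)] .
  moreover have "prod f (A - B) \<le> 1" using assms(3) by (intro prod_le_1) auto
  moreover have "prod f B \<ge> 0" using assms by (intro prod_nonneg) auto
  ultimately show ?thesis using mult_right_mono[of "prod f (A - B)" 1 "prod f B"] by simp
qed

lemma prod_bound:
  fixes p :: nat and S :: "nat set"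
  assumes "finite S" "p \<in> S" "\<forall>r\<in>S. prime r \<and> r > 2 \<and> r \<le> p" "p \<ge> 37"
  shows "(\<Prod>x\<in>S. real x / (real x + 1)) \<ge> h' 12 / (real p + 1)"
proof -
  define g where "g = (\<lambda>x::nat. real x / (real x + 1))"
  have g01: "0 \<le> g x \<and> g x \<le> 1" for x unfolding g_def by auto
  define P where "P = S - {p}"
  define A where "A = {x\<in>{3..<p}. prime x}"
  define T where "T = {x\<in>{3..<37::nat}. prime x}"
  define B where "B = {x\<in>{37..<p}. prime x}"
  have S: "prod g S = g p * prod g P" unfolding P_def using assms by (simp add: prod.remove)
  have PA: "P \<subseteq> A" unfolding P_def A_def using assms by force
  have "prod g A \<le> prod g P" using PA g01 by (intro prod_sub_ge) (auto simp: A_def)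
  have AU: "A = T \<union> B" unfolding A_def T_def B_def using assms by auto
  have "prod g A = prod g T * prod g B" unfolding AU
    by (rule prod.union_disjoint) (auto simp: T_def B_def)
  have "prod g {37..<p} \<le> prod g B" using g01 by (intro prod_sub_ge) (auto simp: B_def)
  moreover have "prod g {37..<p} = 37 / real p" unfolding g_def using telescope[of 37 p] assms by simp
  ultimately have B37: "prod g B \<ge> 37 / real p" by simp
  have T0: "prod g T \<ge> 0" using g01 by (intro prod_nonneg) auto
  have "prod g P \<ge> prod g T * (37 / real p)"
  proof -
    have "prod g T * (37 / real p) \<le> prod g T * prod g B" using B37 T0 by (rule mult_left_mono)
    then show ?thesis using \<open>prod g A \<le> prod g P\<close> \<open>prod g A = prod g T * prod g B\<close> by linarith
  qed
  then have "prod g S \<ge> g p * (prod g T * (37 / real p))"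
    unfolding S using g01 by (intro mult_left_mono) auto
  moreover have "g p * (prod g T * (37 / real p)) = h' 12 / (real p + 1)"
  proof -
    have hT: "h' 12 = 37 * prod g T" unfolding h12 T_def T_eq g_def ..
    have gp: "g p = real p / (real p + 1)" by (simp add: g_def)
    have "real p \<noteq> 0" "real p + 1 \<noteq> 0" using assms by simp_all
    then show ?thesis unfolding hT gp by (simp add: divide_simps)
  qed
  ultimately show ?thesis unfolding g_def by simp
qed


theorem lemma2p4:
  fixes n p :: nat
  assumes "n > 0"
    and "\<forall>r \<in> prime_factors n. r > 2"
    and "p \<in> prime_factors n" and "\<forall>r \<in> prime_factors n. r \<le> p"
    and "p \<ge> 37"
  shows "real (psi (cyclic_group_C n)) \<ge> h' 12 * (real n)^2 / (real p + 1)"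
proof -
  have pb: "(\<Prod>x\<in>prime_factors n. real x / (real x + 1)) \<ge> h' 12 / (real p + 1)"
    using assms by (intro prod_bound) auto
  have "real (psi (cyclic_group_C n)) = real (Gs n)" using psi_Gs[OF assms(1)] by simp
  also have "\<dots> \<ge> real n^2 * (\<Prod>x\<in>prime_factors n. real x / (real x + 1))"
    using Gs_lower[OF assms(1)] .
  finally have "real (psi (cyclic_group_C n)) \<ge> real n^2 * (\<Prod>x\<in>prime_factors n. real x / (real x + 1))" .
  moreover have "real n^2 * (\<Prod>x\<in>prime_factors n. real x / (real x + 1)) \<ge> real n^2 * (h' 12 / (real p + 1))"
    using pb by (intro mult_left_mono) auto
  moreover have "h' 12 * (real n)^2 / (real p + 1) = real n^2 * (h' 12 / (real p + 1))" by simp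
  ultimately show ?thesis by linarith
qed

end
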